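(* Define $\alpha\equiv\beta$ on $\mathrm{Form}$ by: $\vdash\alpha\to\beta$ and $\vdash\beta\to\alpha$ in the calculus $\mathcal{L}_\Delta$ below. Then (a) $\equiv$ is a congruence on $\mathrm{Form}$ regarded as an $\{\delta,\oplus,\neg,0\}$-algebra (with $\alpha\oplus\beta:=\neg\alpha\to\beta$ and $0:=\neg(\alpha_0\to\alpha_0)$ for a fixed formula $\alpha_0$); and (b) the quotient $\mathrm{Form}/{\equiv}$ is a $\delta$-algebra.
   Context: MV-algebras: algebras $(A,\oplus,\neg,0)$ of type $(2,1,0)$ with $(A,\oplus,0)$ a commutative monoid, $\neg\neg a=a$, $a\oplus\neg0=\neg0$, $\neg(\neg a\oplus b)\oplus b=\neg(\neg b\oplus a)\oplus a$; derived $1:=\neg0$, $a\odot b:=\neg(\neg a\oplus\neg b)$, $a\ominus b:=a\odot\neg b$, $a\vee b:=\neg(\neg a\oplus b)\oplus b$ (join of a lattice order $\le$), $d(a,b):=(a\ominus b)\oplus(b\ominus a)$. A $\delta$-algebra is an algebra $(A,\delta,\oplus,\neg,0)$ of type $(\omega,2,1,0)$ whose MV-reduct is an MV-algebra, satisfying, with $\tfrac12(x):=\delta(x,0,0,\dots)$: (i) $d(\delta(\vec x),\delta(x_1,0,0,\dots))=\delta(0,x_2,x_3,\dots)$; (ii) $\tfrac12(\delta(\vec x))=\delta(\tfrac12(x_1),\tfrac12(x_2),\dots)$; (iii) $\delta(x,x,\dots)=x$; (iv) $\delta(0,\vec x)=\tfrac12(\delta(\vec x))$; (v) $\delta(\vec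 x)\le\delta(x_1\oplus y_1,x_2\oplus y_2,\dots)$; (vi) $\tfrac12(x\ominus y)=\tfrac12(x)\ominus\tfrac12(y)$. Formulas: $\mathrm{Form}$ is the least set containing a fixed countably infinite set of propositional variables and closed under $\alpha\to\beta$, $\neg\alpha$, and $\delta(\langle\alpha_i\rangle)$ for every sequence $\langle\alpha_i\rangle=\alpha_1,\alpha_2,\dots$ indexed by $\omega$. Notation: $\langle\alpha\rangle$ is the constant sequence of value $\alpha$; $\alpha,\langle\beta_i\rangle$ is $\alpha,\beta_1,\beta_2,\dots$; $\langle\alpha_i\rangle_{i>1}$ is $\alpha_2,\alpha_3,\dots$; $\tfrac12\alpha:=\delta(\alpha,\langle\neg(\alpha\to\alpha)\rangle)$; a schema $\alpha\leftrightarrow\beta$ stands for the two schemas $\alpha\to\beta$ and $\beta\to\alpha$. The calculus $\mathcal{L}_\Delta$ has axiom schemata (for all formulas): (Ł1) $\alpha\to(\beta\to\alpha)$; (Ł2) $(\alpha\to\beta)\to((\beta\to\gamma)\to(\alpha\to\gamma))$; (Ł3) $((\alpha\to\beta)\to\beta)\to((\beta\to\alpha)\to\alpha)$; (Ł4) $(\neg\alpha\to\neg\beta)\to(\beta\to\alpha)$; (Δ1) $\neg(\delta(\langle\alpha_i\rangle)\to\tfrac12\alpha_1)\leftrightarrow\tfrac12\delta(\langle\alpha_i\rangle_{i>1})$; (Δ2) $\tfrac12\delta(\langle\alpha_i\rangle)\leftrightarrow\delta(\langle\tfrac12\alpha_i\rangle)$; (Δ3) $\delta(\langle\alpha\rangle)\leftrightarrow\alpha$;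 (Δ4) $\tfrac12\delta(\langle\alpha_i\rangle)\leftrightarrow\delta(\neg(\alpha\to\alpha),\langle\alpha_i\rangle)$; (Δ5) $\delta(\langle\alpha_i\rangle)\to\delta(\langle\neg\alpha_i\to\beta_i\rangle)$; (Δ6) $\tfrac12\neg(\alpha\to\beta)\leftrightarrow\neg(\tfrac12\alpha\to\tfrac12\beta)$; (Δ7) $\delta(\langle\alpha_i\to\beta_i\rangle)\to(\delta(\langle\alpha_i\rangle)\to\delta(\langle\beta_i\rangle))$. Rules: Modus Ponens (from $\alpha$ and $\alpha\to\beta$ infer $\beta$) and the $\delta$-rule (from $\alpha_i$ for all $i\in\omega$ infer $\delta(\langle\alpha_i\rangle)$). A proof of $\alpha$ from $\Theta\subseteq\mathrm{Form}$ is a sequence $(\alpha_i)_{i\in\eta+1}$ of formulas indexed by a successor ordinal $\eta+1$ with $\eta$ countable, such that $\alpha_\eta=\alpha$ and each member is an axiom, an element of $\Theta$, or obtained from earlier members by one of the rules. $\Theta^\vdash$ is the set of formulas provable from $\Theta$; $\vdash\alpha$ means $\alpha\in\emptyset^\vdash$. *)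

theory Defs
  imports Main
begin

text \<open>Sequences indexed by omega are functions nat => form; index 0 is the
  first member alpha_1 of the paper's sequence.\<close>

datatype form = Var nat | Imp form form | Neg form | Delta "nat \<Rightarrow> form"

definition fhalf :: "form \<Rightarrow> form" where
  "fhalf a = Delta (\<lambda>i. if i = 0 then a else Neg (Imp a a))"

definition Iff_axs :: "form \<Rightarrow> form \<Rightarrow> form set" where
  "Iff_axs a b = {Imp a b, Imp b a}"

inductive axiom :: "form \<Rightarrow> bool" where
  L1: "axiom (Imp a (Imp b a))"
| L2: "axiom (Imp (Imp a b) (Imp (Imp b c) (Imp a c)))"
| L3: "axiom (Imp (Imp (Imp a b) b) (Imp (Imp b a) a))"
| L4: "axiom (Imp (Imp (Neg a) (Neg b)) (Imp b a))"
| D1: "f \<in> Iff_axs (Neg (Imp (Delta as) (fhalf (as 0)))) (fhalf (Delta (\<lambda>i. as (Suc i)))) \<Longrightarrow> axiom f"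
| D2: "f \<in> Iff_axs (fhalf (Delta as)) (Delta (\<lambda>i. fhalf (as i))) \<Longrightarrow> axiom f"
| D3: "f \<in> Iff_axs (Delta (\<lambda>i. a)) a \<Longrightarrow> axiom f"
| D4: "f \<in> Iff_axs (fhalf (Delta as))
          (Delta (\<lambda>i. if i = 0 then Neg (Imp a a) else as (i - 1))) \<Longrightarrow> axiom f"
| D5: "axiom (Imp (Delta as) (Delta (\<lambda>i. Imp (Neg (as i)) (bs i))))"
| D6: "f \<in> Iff_axs (fhalf (Neg (Imp a b))) (Neg (Imp (fhalf a) (fhalf b))) \<Longrightarrow> axiom f"
| D7: "axiom (Imp (Delta (\<lambda>i. Imp (as i) (bs i))) (Imp (Delta as) (Delta bs)))"

inductive_set provable :: "form set \<Rightarrow> form set" for Theta :: "form set" where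
  ax: "axiom a \<Longrightarrow> a \<in> provable Theta"
| hyp: "a \<in> Theta \<Longrightarrow> a \<in> provable Theta"
| mp: "a \<in> provable Theta \<Longrightarrow> Imp a b \<in> provable Theta \<Longrightarrow> b \<in> provable Theta"
| delta: "(\<And>i. as i \<in> provable Theta) \<Longrightarrow> Delta as \<in> provable Theta"

definition prov :: "form \<Rightarrow> bool" where
  "prov a \<longleftrightarrow> a \<in> provable {}"

definition feqv :: "form \<Rightarrow> form \<Rightarrow> bool" where
  "feqv a b \<longleftrightarrow> prov (Imp a b) \<and> prov (Imp b a)"

definition feqv_rel :: "(form \<times> form) set" where
  "feqv_rel = {(a, b). feqv a b}"

definition fplus :: "form \<Rightarrow> form \<Rightarrow> form" where
  "fplus a b = Imp (Neg a) b"

definition fzero :: "form \<Rightarrow> form" where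
  "fzero a0 = Neg (Imp a0 a0)"

definition mv_algebra :: "'a set \<Rightarrow> ('a \<Rightarrow> 'a \<Rightarrow> 'a) \<Rightarrow> ('a \<Rightarrow> 'a) \<Rightarrow> 'a \<Rightarrow> bool" where
  "mv_algebra A pl ng z \<longleftrightarrow>
     z \<in> A \<and> (\<forall>a\<in>A. \<forall>b\<in>A. pl a b \<in> A) \<and> (\<forall>a\<in>A. ng a \<in> A) \<and>
     (\<forall>a\<in>A. \<forall>b\<in>A. \<forall>c\<in>A. pl (pl a b) c = pl a (pl b c)) \<and>
     (\<forall>a\<in>A. \<forall>b\<in>A. pl a b = pl b a) \<and>
     (\<forall>a\<in>A. pl a z = a) \<and>
     (\<forall>a\<in>A. ng (ng a) = a) \<and>
     (\<forall>a\<in>A. pl a (ng z) = ng z) \<and>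
     (\<forall>a\<in>A. \<forall>b\<in>A. pl (ng (pl (ng a) b)) b = pl (ng (pl (ng b) a)) a)"

definition mv_minus :: "('a \<Rightarrow> 'a \<Rightarrow> 'a) \<Rightarrow> ('a \<Rightarrow> 'a) \<Rightarrow> 'a \<Rightarrow> 'a \<Rightarrow> 'a" where
  "mv_minus pl ng a b = ng (pl (ng a) (ng (ng b)))"  \<comment> \<open>a \<odot> \<not>b = \<not>(\<not>a \<oplus> \<not>\<not>b)\<close>

definition mv_join :: "('a \<Rightarrow> 'a \<Rightarrow> 'a) \<Rightarrow> ('a \<Rightarrow> 'a) \<Rightarrow> 'a \<Rightarrow> 'a \<Rightarrow> 'a" where
  "mv_join pl ng a b = pl (ng (pl (ng a) b)) b"

definition mv_le :: "('a \<Rightarrow> 'a \<Rightarrow> 'a) \<Rightarrow> ('a \<Rightarrow> 'a) \<Rightarrow> 'a \<Rightarrow> 'a \<Rightarrow> bool" where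
  "mv_le pl ng a b \<longleftrightarrow> mv_join pl ng a b = b"

definition mv_dist :: "('a \<Rightarrow> 'a \<Rightarrow> 'a) \<Rightarrow> ('a \<Rightarrow> 'a) \<Rightarrow> 'a \<Rightarrow> 'a \<Rightarrow> 'a" where
  "mv_dist pl ng a b = pl (mv_minus pl ng a b) (mv_minus pl ng b a)"

definition delta_algebra ::
  "'a set \<Rightarrow> ((nat \<Rightarrow> 'a) \<Rightarrow> 'a) \<Rightarrow> ('a \<Rightarrow> 'a \<Rightarrow> 'a) \<Rightarrow> ('a \<Rightarrow> 'a) \<Rightarrow> 'a \<Rightarrow> bool" where
  "delta_algebra A dl pl ng z \<longleftrightarrow>
     (let half = (\<lambda>x. dl (\<lambda>i. if i = 0 then x else z));
          mn = mv_minus pl ng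
      in mv_algebra A pl ng z \<and>
     (\<forall>x. (\<forall>i. x i \<in> A) \<longrightarrow> dl x \<in> A) \<and>
     (\<forall>x. (\<forall>i. x i \<in> A) \<longrightarrow>
        mv_dist pl ng (dl x) (half (x 0)) = dl (\<lambda>i. if i = 0 then z else x i)) \<and>
     (\<forall>x. (\<forall>i. x i \<in> A) \<longrightarrow> half (dl x) = dl (\<lambda>i. half (x i))) \<and>
     (\<forall>x\<in>A. dl (\<lambda>i. x) = x) \<and>
     (\<forall>x. (\<forall>i. x i \<in> A) \<longrightarrow> dl (\<lambda>i. if i = 0 then z else x (i - 1)) = half (dl x)) \<and>
     (\<forall>x y. (\<forall>i. x i \<in> A) \<longrightarrow> (\<forall>i. y i \<in> A) \<longrightarrow>
        mv_le pl ng (dl x) (dl (\<lambda>i. pl (x i) (y i)))) \<and>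
     (\<forall>x\<in>A. \<forall>y\<in>A. half (mn x y) = mn (half x) (half y)))"

definition fclass :: "form \<Rightarrow> form set" where
  "fclass a = feqv_rel `` {a}"

definition frep :: "form set \<Rightarrow> form" where
  "frep X = (SOME a. a \<in> X)"

definition Q_carrier :: "form set set" where
  "Q_carrier = UNIV // feqv_rel"

definition Q_plus :: "form set \<Rightarrow> form set \<Rightarrow> form set" where
  "Q_plus X Y = fclass (fplus (frep X) (frep Y))"

definition Q_neg :: "form set \<Rightarrow> form set" where
  "Q_neg X = fclass (Neg (frep X))"

definition Q_zero :: "form \<Rightarrow> form set" where
  "Q_zero a0 = fclass (fzero a0)"

definition Q_delta :: "(nat \<Rightarrow> form set) \<Rightarrow> form set" where
  "Q_delta Xs = fclass (Delta (\<lambda>i. frep (Xs i)))"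

end

theory Submission
  imports Defs
begin

lemma P_ax: "axiom a \<Longrightarrow> prov a" by (simp add: prov_def provable.ax)
lemma P_mp: "prov a \<Longrightarrow> prov (Imp a b) \<Longrightarrow> prov b" unfolding prov_def by (rule provable.mp)
lemma P_delta: "(\<And>i. prov (as i)) \<Longrightarrow> prov (Delta as)" unfolding prov_def by (rule provable.delta)

lemma A1: "prov (Imp a (Imp b a))" by (rule P_ax, rule axiom.L1)
lemma A2: "prov (Imp (Imp a b) (Imp (Imp b c) (Imp a c)))" by (rule P_ax, rule axiom.L2)
lemma A3: "prov (Imp (Imp (Imp a b) b) (Imp (Imp b a) a))" by (rule P_ax, rule axiom.L3)
lemma A4: "prov (Imp (Imp (Neg a) (Neg b)) (Imp b a))" by (rule P_ax, rule axiom.L4)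

lemma hs_rule: "prov (Imp a b) \<Longrightarrow> prov (Imp b c) \<Longrightarrow> prov (Imp a c)"
  by (meson A2 P_mp)
lemma S_rule: "prov (Imp a b) \<Longrightarrow> prov (Imp (Imp b c) (Imp a c))"
  by (meson A2 P_mp)

lemma T: "prov (Imp a (Imp (Imp a b) b))"
proof -
  have "prov (Imp a (Imp (Imp b a) a))" by (rule A1)
  then have "prov (Imp (Imp (Imp (Imp b a) a) (Imp (Imp a b) b)) (Imp a (Imp (Imp a b) b)))"
    by (rule S_rule)
  then show ?thesis using A3 P_mp by blast
qed

lemma pid: "prov (Imp a a)"
proof -
  let ?K = "Imp a (Imp a a)"
  have k: "prov ?K" by (rule A1)
  have "prov (Imp (Imp ?K a) a)" using P_mp[OF k T] .
  moreover have "prov (Imp (Imp (Imp ?K a) a) (Imp a a))" using S_rule[OF A1[of a ?K]] .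
  ultimately show ?thesis by (rule P_mp)
qed

lemma true_prem: "prov p \<Longrightarrow> prov (Imp (Imp p x) x)"
  using P_mp T by blast

lemma exch: "prov (Imp (Imp a (Imp b c)) (Imp b (Imp a c)))"
proof -
  have 1: "prov (Imp (Imp a (Imp b c)) (Imp (Imp (Imp b c) c) (Imp a c)))" by (rule A2)
  have 2: "prov (Imp (Imp (Imp (Imp b c) c) (Imp a c)) (Imp b (Imp a c)))" by (rule S_rule[OF T])
  show ?thesis by (rule hs_rule[OF 1 2])
qed

lemma prefix_rule: "prov (Imp b c) \<Longrightarrow> prov (Imp (Imp a b) (Imp a c))"
  by (meson A2 P_mp exch)

lemma dn1: "prov (Imp (Neg (Neg a)) a)"
proof -
  let ?t = "Imp a a"
  have s1: "prov (Imp (Neg (Neg a)) (Imp (Neg (Neg ?t)) (Neg (Neg a))))" by (rule A1)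
  have s2: "prov (Imp (Imp (Neg (Neg ?t)) (Neg (Neg a))) (Imp (Neg a) (Neg ?t)))" by (rule A4)
  have s3: "prov (Imp (Imp (Neg a) (Neg ?t)) (Imp ?t a))" by (rule A4)
  have s4: "prov (Imp (Imp ?t a) a)" by (rule true_prem[OF pid])
  show ?thesis by (meson hs_rule s1 s2 s3 s4)
qed

lemma dn2: "prov (Imp a (Neg (Neg a)))"
  using P_mp[OF dn1[of "Neg a"] A4[of "Neg (Neg a)" a]] .

lemma contra: "prov (Imp (Imp a b) (Imp (Neg b) (Neg a)))"
proof -
  have c1: "prov (Imp (Imp a b) (Imp (Neg (Neg a)) b))" by (rule S_rule[OF dn1])
  have c2: "prov (Imp (Imp (Neg (Neg a)) b) (Imp (Neg (Neg a)) (Neg (Neg b))))" by (rule prefix_rule[OF dn2])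
  have c3: "prov (Imp (Imp (Neg (Neg a)) (Neg (Neg b))) (Imp (Neg b) (Neg a)))" by (rule A4)
  show ?thesis by (meson hs_rule c1 c2 c3)
qed

lemma feqv_refl: "feqv a a" by (simp add: feqv_def pid)
lemma feqv_sym: "feqv a b \<Longrightarrow> feqv b a" by (simp add: feqv_def)
lemma feqv_trans: "feqv a b \<Longrightarrow> feqv b c \<Longrightarrow> feqv a c" by (meson feqv_def hs_rule)

lemma feqv_Imp: "feqv a b \<Longrightarrow> feqv c d \<Longrightarrow> feqv (Imp a c) (Imp b d)"
  unfolding feqv_def by (meson S_rule prefix_rule hs_rule)
lemma feqv_Neg: "feqv a b \<Longrightarrow> feqv (Neg a) (Neg b)"
  unfolding feqv_def by (meson contra P_mp)
lemma feqv_Delta: "(\<forall>i. feqv (as i) (bs i)) \<Longrightarrow> feqv (Delta as) (Delta bs)"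
proof -
  assume h: "\<forall>i. feqv (as i) (bs i)"
  have D7: "\<And>as bs. prov (Imp (Delta (\<lambda>i. Imp (as i) (bs i))) (Imp (Delta as) (Delta bs)))"
    by (rule P_ax, rule axiom.D7)
  have "prov (Delta (\<lambda>i. Imp (as i) (bs i)))" using h by (intro P_delta) (simp add: feqv_def)
  moreover have "prov (Delta (\<lambda>i. Imp (bs i) (as i)))" using h by (intro P_delta) (simp add: feqv_def)
  ultimately show ?thesis unfolding feqv_def using D7 P_mp by blast
qed
lemma feqv_prov: "prov a \<Longrightarrow> prov b \<Longrightarrow> feqv a b" unfolding feqv_def by (meson A1 P_mp)
lemma feqv_dn: "feqv (Neg (Neg a)) a" by (simp add: feqv_def dn1 dn2)
lemma feqv_true: "prov p \<Longrightarrow> feqv (Imp p x) x" unfolding feqv_def by (simp add: true_prem A1)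
lemma feqv_comm: "feqv (Imp (Neg a) b) (Imp (Neg b) a)"
proof -
  have "\<And>a b. prov (Imp (Imp (Neg a) b) (Imp (Neg b) a))"
    by (meson hs_rule contra prefix_rule dn1)
  then show ?thesis by (simp add: feqv_def)
qed
lemma feqv_exch: "feqv (Imp a (Imp b c)) (Imp b (Imp a c))" by (simp add: feqv_def exch)
lemma feqv_assoc: "feqv (fplus (fplus a b) c) (fplus a (fplus b c))"
  unfolding fplus_def
  by (meson feqv_comm feqv_exch feqv_trans feqv_Imp feqv_refl)
lemma feqv_zero: "prov t \<Longrightarrow> feqv (Imp (Neg a) (Neg t)) a"
  unfolding feqv_def by (meson A4 true_prem A1 contra hs_rule)
lemma feqv_luk: "feqv (Imp (Imp a b) b) (Imp (Imp b a) a)" by (simp add: feqv_def A3)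


lemma equiv_feqv: "equiv UNIV feqv_rel"
  unfolding feqv_rel_def
  by (rule equivI) (auto intro!: refl_onI symI transI intro: feqv_refl feqv_sym feqv_trans)

lemma fclass_eq: "fclass a = fclass b \<longleftrightarrow> feqv a b"
  unfolding fclass_def using eq_equiv_class_iff[OF equiv_feqv] by (simp add: feqv_rel_def)

lemma in_fclass: "b \<in> fclass a \<longleftrightarrow> feqv a b"
  by (simp add: fclass_def feqv_rel_def)

lemma frep_fclass: "feqv (frep (fclass a)) a"
proof -
  have "a \<in> fclass a" by (simp add: in_fclass feqv_refl)
  then have "frep (fclass a) \<in> fclass a" unfolding frep_def by (rule someI)
  then show ?thesis by (simp add: in_fclass feqv_sym)
qed

lemma fclass_in: "fclass a \<in> Q_carrier"
  unfolding Q_carrier_def fclass_def by (rule quotientI) simp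

lemma elQ: "X \<in> Q_carrier \<Longrightarrow> X = fclass (frep X)"
proof -
  assume "X \<in> Q_carrier"
  then obtain x where x: "X = fclass x" unfolding Q_carrier_def fclass_def by (auto elim: quotientE)
  show ?thesis using x frep_fclass fclass_eq feqv_sym by metis
qed

lemma seqQ: "(\<forall>i. x i \<in> Q_carrier) \<Longrightarrow> \<exists>as. x = (\<lambda>i. fclass (as i))"
proof -
  assume h: "\<forall>i. x i \<in> Q_carrier"
  have "x = (\<lambda>i. fclass (frep (x i)))" by (rule ext) (metis h elQ)
  then show ?thesis by (rule exI[of _ "\<lambda>i. frep (x i)"])
qed

lemma elQ': "X \<in> Q_carrier \<Longrightarrow> \<exists>a. X = fclass a"
  using elQ by blast

lemma elQE: "X \<in> Q_carrier \<Longrightarrow> (\<And>a. X = fclass a \<Longrightarrow> P) \<Longrightarrow> P"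
  using elQ by blast

lemma Q_plus_cl[simp]: "Q_plus (fclass a) (fclass b) = fclass (fplus a b)"
  unfolding Q_plus_def fplus_def fclass_eq
  by (intro feqv_Imp feqv_Neg frep_fclass)

lemma Q_neg_cl[simp]: "Q_neg (fclass a) = fclass (Neg a)"
  unfolding Q_neg_def fclass_eq
  by (intro feqv_Neg frep_fclass)

lemma Qd: "(\<And>i. f i = fclass (g i)) \<Longrightarrow> Q_delta f = fclass (Delta g)"
  unfolding Q_delta_def fclass_eq
  by (intro feqv_Delta) (simp add: frep_fclass)

lemma Qd'[simp]: "Q_delta (\<lambda>i. fclass (g i)) = fclass (Delta g)"
  by (rule Qd) simp

lemma Q_half[simp]: "Q_delta (\<lambda>i. if i = 0 then fclass a else Q_zero a0) = fclass (fhalf a)"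
proof -
  have "Q_delta (\<lambda>i. if i = 0 then fclass a else Q_zero a0)
      = fclass (Delta (\<lambda>i. if i = 0 then a else fzero a0))"
    by (rule Qd) (simp add: Q_zero_def)
  also have "\<dots> = fclass (fhalf a)"
    unfolding fhalf_def fclass_eq fzero_def
    by (intro feqv_Delta allI) (simp add: feqv_refl feqv_Neg feqv_prov pid)
  finally show ?thesis .
qed

lemma Q_minus[simp]: "mv_minus Q_plus Q_neg (fclass a) (fclass b) = fclass (Neg (Imp a b))"
  unfolding mv_minus_def fplus_def fclass_eq Q_plus_cl Q_neg_cl
  by (intro feqv_Neg feqv_Imp feqv_dn)

lemma mv: "mv_algebra Q_carrier Q_plus Q_neg (Q_zero a0)"
  unfolding mv_algebra_def
proof (intro conjI ballI)
  show "Q_zero a0 \<in> Q_carrier" by (simp add: Q_zero_def fclass_in)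
next
  fix a b assume "a \<in> Q_carrier" "b \<in> Q_carrier"
  then show "Q_plus a b \<in> Q_carrier" by (elim elQE) (simp add: fclass_in)
next
  fix a assume "a \<in> Q_carrier"
  then show "Q_neg a \<in> Q_carrier" by (elim elQE) (simp add: fclass_in)
next
  fix a b c assume "a \<in> Q_carrier" "b \<in> Q_carrier" "c \<in> Q_carrier"
  then show "Q_plus (Q_plus a b) c = Q_plus a (Q_plus b c)"
    by (elim elQE) (simp add: fclass_eq feqv_assoc)
next
  fix a b assume "a \<in> Q_carrier" "b \<in> Q_carrier"
  then show "Q_plus a b = Q_plus b a"
    by (elim elQE) (simp add: fclass_eq fplus_def feqv_comm)
next
  fix a assume "a \<in> Q_carrier"
  then show "Q_plus a (Q_zero a0) = a"
    by (elim elQE) (simp add: fclass_eq fplus_def Q_zero_def fzero_def feqv_zero pid)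
next
  fix a assume "a \<in> Q_carrier"
  then show "Q_neg (Q_neg a) = a"
    by (elim elQE) (simp add: fclass_eq feqv_dn)
next
  fix a assume "a \<in> Q_carrier"
  then show "Q_plus a (Q_neg (Q_zero a0)) = Q_neg (Q_zero a0)"
    by (elim elQE) (simp add: fclass_eq fplus_def Q_zero_def fzero_def
        feqv_prov P_mp[OF P_mp[OF pid dn2] A1] P_mp[OF pid dn2])
next
  fix a b assume "a \<in> Q_carrier" "b \<in> Q_carrier"
  moreover have "\<And>x y. feqv (fplus (Neg (fplus (Neg x) y)) y) (fplus (Neg (fplus (Neg y) x)) x)"
    unfolding fplus_def
    by (meson feqv_trans feqv_luk feqv_Imp feqv_dn feqv_refl feqv_sym)
  ultimately show "Q_plus (Q_neg (Q_plus (Q_neg a) b)) b = Q_plus (Q_neg (Q_plus (Q_neg b) a)) a"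
    by (elim elQE) (simp add: fclass_eq)
qed


lemma iff_ax: "(\<And>f. f \<in> Iff_axs a b \<Longrightarrow> axiom f) \<Longrightarrow> feqv a b"
  by (simp add: feqv_def Iff_axs_def P_ax)

lemma fD1: "feqv (Neg (Imp (Delta as) (fhalf (as 0)))) (fhalf (Delta (\<lambda>i. as (Suc i))))"
  by (rule iff_ax, rule axiom.D1[where as=as])
lemma fD2: "feqv (fhalf (Delta as)) (Delta (\<lambda>i. fhalf (as i)))"
  by (rule iff_ax, rule axiom.D2[where as=as])
lemma fD3: "feqv (Delta (\<lambda>i. a)) a"
  by (rule iff_ax, rule axiom.D3[where a=a])
lemma fD4: "feqv (fhalf (Delta as)) (Delta (\<lambda>i. if i = 0 then Neg (Imp a a) else as (i - 1)))"
  by (rule iff_ax, rule axiom.D4[where as=as and a=a])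
lemma pD5: "prov (Imp (Delta as) (Delta (\<lambda>i. Imp (Neg (as i)) (bs i))))"
  by (rule P_ax, rule axiom.D5)
lemma fD6: "feqv (fhalf (Neg (Imp a b))) (Neg (Imp (fhalf a) (fhalf b)))"
  by (rule iff_ax, rule axiom.D6[where a=a and b=b])

lemma le_half: "prov (Imp (fhalf (as 0)) (Delta as))"
proof -
  define c where "c = as 0"
  define s where "s = (\<lambda>i::nat. if i = 0 then c else Neg (Imp c c))"
  define bs where "bs = (\<lambda>i::nat. if i = 0 then Neg (Imp c c) else as i)"
  have 1: "prov (Imp (Delta s) (Delta (\<lambda>i. Imp (Neg (s i)) (bs i))))" by (rule pD5)
  have "\<forall>i. feqv (Imp (Neg (s i)) (bs i)) (as i)"
  proof
    fix i show "feqv (Imp (Neg (s i)) (bs i)) (as i)"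
    proof (cases "i = 0")
      case True then show ?thesis using feqv_zero[where t="Imp c c" and a=c, OF pid] by (simp add: s_def bs_def c_def)
    next
      case False then show ?thesis using feqv_true[where p="Neg (Neg (Imp c c))" and x="as i", OF P_mp[OF pid dn2]]
        by (simp add: s_def bs_def)
    qed
  qed
  then have "feqv (Delta (\<lambda>i. Imp (Neg (s i)) (bs i))) (Delta as)" by (rule feqv_Delta)
  then have 2: "prov (Imp (Delta (\<lambda>i. Imp (Neg (s i)) (bs i))) (Delta as))"
    by (simp add: feqv_def)
  have "fhalf (as 0) = Delta s" by (simp add: fhalf_def s_def c_def[symmetric])
  then show ?thesis using hs_rule[OF 1 2] by simp
qed

lemma f_i: "feqv (fplus (Neg (Imp (Delta as) (fhalf (as 0)))) (Neg (Imp (fhalf (as 0)) (Delta as))))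
                 (Delta (\<lambda>i. if i = 0 then fzero a0 else as i))"
proof -
  let ?D = "Delta (\<lambda>i. as (Suc i))"
  have e3: "feqv (Neg (Imp (fhalf (as 0)) (Delta as))) (Neg (Imp a0 a0))"
    by (intro feqv_Neg feqv_prov le_half pid)
  have e12: "feqv (fplus (Neg (Imp (Delta as) (fhalf (as 0)))) (Neg (Imp (fhalf (as 0)) (Delta as))))
              (Imp (Neg (fhalf ?D)) (Neg (Imp a0 a0)))"
    unfolding fplus_def by (intro feqv_Imp feqv_Neg fD1 e3)
  have e4: "feqv (Imp (Neg (fhalf ?D)) (Neg (Imp a0 a0))) (fhalf ?D)"
    by (rule feqv_zero[OF pid])
  have e5: "feqv (fhalf ?D) (Delta (\<lambda>i. if i = 0 then Neg (Imp a0 a0) else as (Suc (i - 1))))"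
    using fD4[of "\<lambda>i. as (Suc i)" a0] by simp
  have e6: "(\<lambda>i. if i = 0 then Neg (Imp a0 a0) else as (Suc (i - 1)))
           = (\<lambda>i. if i = 0 then fzero a0 else as i)"
    by (rule ext) (simp add: fzero_def)
  show ?thesis using feqv_trans[OF feqv_trans[OF e12 e4] e5] unfolding e6 .
qed

lemma f_v: "prov (Imp a b) \<Longrightarrow> feqv (fplus (Neg (fplus (Neg a) b)) b) b"
proof -
  assume h: "prov (Imp a b)"
  have "feqv (fplus (Neg (fplus (Neg a) b)) b) (Imp (Imp a b) b)"
    unfolding fplus_def
    by (rule feqv_Imp[OF feqv_trans[OF feqv_dn feqv_Imp[OF feqv_dn feqv_refl]] feqv_refl])
  then show ?thesis by (rule feqv_trans[OF _ feqv_true[OF h]])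
qed

lemma dl: "delta_algebra Q_carrier Q_delta Q_plus Q_neg (Q_zero a0)"
  unfolding delta_algebra_def Let_def
proof (intro conjI allI impI ballI)
  show "mv_algebra Q_carrier Q_plus Q_neg (Q_zero a0)" by (rule mv)
next
  fix x :: "nat \<Rightarrow> form set" assume "\<forall>i. x i \<in> Q_carrier"
  then show "Q_delta x \<in> Q_carrier" by (simp add: Q_delta_def fclass_in)
next
  fix x :: "nat \<Rightarrow> form set" assume "\<forall>i. x i \<in> Q_carrier"
  then obtain as where x: "x = (\<lambda>i. fclass (as i))" using seqQ by blast
  have r: "Q_delta (\<lambda>i. if i = 0 then Q_zero a0 else fclass (as i))
         = fclass (Delta (\<lambda>i. if i = 0 then fzero a0 else as i))"
    by (rule Qd) (simp add: Q_zero_def)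
  show "mv_dist Q_plus Q_neg (Q_delta x) (Q_delta (\<lambda>i. if i = 0 then x 0 else Q_zero a0)) =
        Q_delta (\<lambda>i. if i = 0 then Q_zero a0 else x i)"
    unfolding x mv_dist_def using r by (simp add: fclass_eq f_i)
next
  fix x :: "nat \<Rightarrow> form set" assume "\<forall>i. x i \<in> Q_carrier"
  then obtain as where x: "x = (\<lambda>i. fclass (as i))" using seqQ by blast
  show "Q_delta (\<lambda>i. if i = 0 then Q_delta x else Q_zero a0) =
        Q_delta (\<lambda>i. Q_delta (\<lambda>ia. if ia = 0 then x i else Q_zero a0))"
    unfolding x Qd' by (simp add: fclass_eq fD2)
next
  fix a assume "a \<in> Q_carrier"
  then show "Q_delta (\<lambda>i. a) = a"
    by (elim elQE) (simp add: fclass_eq fD3)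
next
  fix x :: "nat \<Rightarrow> form set" assume "\<forall>i. x i \<in> Q_carrier"
  then obtain as where x: "x = (\<lambda>i. fclass (as i))" using seqQ by blast
  have r: "Q_delta (\<lambda>i. if i = 0 then Q_zero a0 else fclass (as (i - 1)))
         = fclass (Delta (\<lambda>i. if i = 0 then Neg (Imp a0 a0) else as (i - 1)))"
    by (rule Qd) (simp add: Q_zero_def fzero_def)
  show "Q_delta (\<lambda>i. if i = 0 then Q_zero a0 else x (i - 1)) =
        Q_delta (\<lambda>i. if i = 0 then Q_delta x else Q_zero a0)"
    unfolding x Qd' using r by (simp add: fclass_eq feqv_sym[OF fD4])
next
  fix x y :: "nat \<Rightarrow> form set"
  assume "\<forall>i. x i \<in> Q_carrier" "\<forall>i. y i \<in> Q_carrier"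
  then obtain as bs where x: "x = (\<lambda>i. fclass (as i))" and y: "y = (\<lambda>i. fclass (bs i))"
    using seqQ by meson
  have "prov (Imp (Delta as) (Delta (\<lambda>i. fplus (as i) (bs i))))"
    unfolding fplus_def by (rule pD5)
  then show "mv_le Q_plus Q_neg (Q_delta x) (Q_delta (\<lambda>i. Q_plus (x i) (y i)))"
    unfolding x y mv_le_def mv_join_def by (simp add: fclass_eq f_v)
next
  fix a b assume "a \<in> Q_carrier" "b \<in> Q_carrier"
  then show "Q_delta (\<lambda>i. if i = 0 then mv_minus Q_plus Q_neg a b else Q_zero a0) =
       mv_minus Q_plus Q_neg (Q_delta (\<lambda>i. if i = 0 then a else Q_zero a0))
        (Q_delta (\<lambda>i. if i = 0 then b else Q_zero a0))"
    by (elim elQE, hypsubst) (simp only: Q_minus Q_half fclass_eq fD6)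
qed

theorem mainTheorem11:
  fixes a0 :: form
  shows "(equiv UNIV feqv_rel \<and>
          (\<forall>a b c d. feqv a b \<longrightarrow> feqv c d \<longrightarrow> feqv (fplus a c) (fplus b d)) \<and>
          (\<forall>a b. feqv a b \<longrightarrow> feqv (Neg a) (Neg b)) \<and>
          feqv (fzero a0) (fzero a0) \<and>
          (\<forall>as bs. (\<forall>i. feqv (as i) (bs i)) \<longrightarrow> feqv (Delta as) (Delta bs)))
       \<and> delta_algebra Q_carrier Q_delta Q_plus Q_neg (Q_zero a0)"
  by (simp add: equiv_feqv fplus_def feqv_Imp feqv_Neg feqv_refl feqv_Delta dl)

end
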